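(* Let $l$ be a symmetric function on $\Omega\times\Omega$ and $v_1,\ldots,v_p$ functions on $\Omega$; let $\mathcal{X}=\{x_1,\ldots,x_n\}\subset\Omega$ be such that $\mathbf{V}=[v_j(x_i)]\in\mathbb{R}^{n\times p}$ has full column rank and $\widetilde{\mathbf{L}}=(\mathbf{I}-\mathbf{Q}\mathbf{Q}^\top)\mathbf{L}(\mathbf{I}-\mathbf{Q}\mathbf{Q}^\top)$ is positive semi-definite, where $\mathbf{L}=[l(x_i,x_j)]$ and $\mathbf{Q}$ is an orthonormal basis of the column span of $\mathbf{V}$. For $\varepsilon>0$ consider GP regression with prior covariance $k_\varepsilon(x,y)=l(x,y)+\varepsilon^{-1}\sum_{i=1}^p v_i(x)v_i(y)$, observations $\mathbf{y}$ at $\mathcal{X}$ and noise variance $\sigma^2>0$, with predictive variance $\mathrm{Var}_\varepsilon(f(x)\mid\mathbf{y})=k_\varepsilon(x,x)-\mathbf{k}^\varepsilon_{x,\mathcal{X}}(\mathbf{K}_\varepsilon+\sigma^2\mathbf{I})^{-1}(\mathbf{k}^\varepsilon_{x,\mathcal{X}})^\top$, where $\mathbf{k}^\varepsilon_{x,\mathcal{X}}=[k_\varepsilon(x,x_i)]_i$ and $\mathbf{K}_\varepsilon=[k_\varepsilon(x_i,x_j)]$. Then for every $x\in\Omega$, as $\varepsilon\to0$, $$\mathrm{Var}_\varepsilon(f(x)\mid\mathbf{y})=l(x,x)-(\mathbf{l}_{x,\mathcal{X}}\ \ \mathbf{v}_x)\begin{pmatrix}\mathbf{L}+\sigma^2\mathbf{I}&\mathbf{V}\\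 \mathbf{V}^\top&\mathbf{0}\end{pmatrix}^{-1}\begin{pmatrix}\mathbf{l}_{x,\mathcal{X}}^\top\\ \mathbf{v}_x^\top\end{pmatrix}+O(\varepsilon),$$ where $\mathbf{l}_{x,\mathcal{X}}=[l(x,x_1),\ldots,l(x,x_n)]$ and $\mathbf{v}_x=[v_1(x),\ldots,v_p(x)]$.
   Context: In particular the predictive variance does not diverge as $\varepsilon\to0$ even though the prior variance along the functions $v_i$ tends to infinity. *)

theory Defs
  imports "HOL-Analysis.Analysis" "HOL-Library.Landau_Symbols"
begin

definition psd_mat :: "real^'n^'n \<Rightarrow> bool" where
  "psd_mat A \<longleftrightarrow> (\<forall>z. 0 \<le> z \<bullet> (A *v z))"

definition k_eps :: "('a \<Rightarrow> 'a \<Rightarrow> real) \<Rightarrow> ('p::finite \<Rightarrow> 'a \<Rightarrow> real) \<Rightarrow> real \<Rightarrow> 'a \<Rightarrow> 'a \<Rightarrow> real" where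
  "k_eps l v \<epsilon> x y = l x y + inverse \<epsilon> * (\<Sum>i\<in>UNIV. v i x * v i y)"

definition gp_pred_var :: "('a \<Rightarrow> 'a \<Rightarrow> real) \<Rightarrow> ('n::finite \<Rightarrow> 'a) \<Rightarrow> real \<Rightarrow> 'a \<Rightarrow> real" where
  "gp_pred_var k X \<sigma>2 x =
     (let kx = (\<chi> i. k x (X i)) :: real^'n;
          K = (\<chi> i j. k (X i) (X j)) :: real^'n^'n
      in k x x - kx \<bullet> (matrix_inv (K + \<sigma>2 *\<^sub>R mat 1) *v kx))"

definition gram_mat :: "('a \<Rightarrow> 'a \<Rightarrow> real) \<Rightarrow> ('n::finite \<Rightarrow> 'a) \<Rightarrow> real^'n^'n" where
  "gram_mat l X = (\<chi> i j. l (X i) (X j))"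

definition design_mat :: "('p::finite \<Rightarrow> 'a \<Rightarrow> real) \<Rightarrow> ('n::finite \<Rightarrow> 'a) \<Rightarrow> real^'p^'n" where
  "design_mat v X = (\<chi> i j. v j (X i))"

definition block_mat :: "real^'n^'n \<Rightarrow> real^'p^'n \<Rightarrow> real \<Rightarrow> real^('n::finite + 'p::finite)^('n + 'p)" where
  "block_mat L V \<sigma>2 = (\<chi> a b. case (a, b) of
       (Inl i, Inl j) \<Rightarrow> L $ i $ j + \<sigma>2 * (if i = j then 1 else 0)
     | (Inl i, Inr j) \<Rightarrow> V $ i $ j
     | (Inr i, Inl j) \<Rightarrow> V $ j $ i
     | (Inr i, Inr j) \<Rightarrow> 0)"

definition limit_var :: "('a \<Rightarrow> 'a \<Rightarrow> real) \<Rightarrow> ('p::finite \<Rightarrow> 'a \<Rightarrow> real) \<Rightarrow> ('n::finite \<Rightarrow> 'a) \<Rightarrow> real \<Rightarrow> 'a \<Rightarrow> real" where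
  "limit_var l v X \<sigma>2 x =
     (let w = (\<chi> a. case a of Inl i \<Rightarrow> l x (X i) | Inr j \<Rightarrow> v j x) :: real^('n + 'p)
      in l x x - w \<bullet> (matrix_inv (block_mat (gram_mat l X) (design_mat v X) \<sigma>2) *v w))"

end

theory Submission
  imports Defs
begin

lemma minv_props:
  fixes A :: "real^'n::finite^'n"
  assumes "invertible A"
  shows "matrix_inv A ** A = mat 1" "A ** matrix_inv A = mat 1"
proof -
  have "\<exists>A'. A ** A' = mat 1 \<and> A' ** A = mat 1" using assms unfolding invertible_def by blast
  then have "A ** matrix_inv A = mat 1 \<and> matrix_inv A ** A = mat 1"
    unfolding matrix_inv_def by (rule someI_ex)
  then show "matrix_inv A ** A = mat 1" "A ** matrix_inv A = mat 1" by auto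
qed

lemma minv_solve:
  fixes A :: "real^'n::finite^'n"
  assumes "invertible A" "A *v y = t"
  shows "matrix_inv A *v t = y"
  by (metis assms minv_props(1) matrix_vector_mul_assoc matrix_vector_mul_lid)

lemma inv_from_ker:
  fixes A :: "real^'n::finite^'n"
  assumes "\<And>y. A *v y = 0 \<Longrightarrow> y = 0"
  shows "invertible A"
  using assms matrix_left_invertible_ker invertible_left_inverse by blast

lemma inv_ker:
  fixes A :: "real^'n::finite^'n"
  assumes "invertible A" "A *v y = 0"
  shows "y = 0"
  by (metis assms minv_solve matrix_vector_mult_0_right)

lemma sum_plus_UNIV:
  "(\<Sum>a\<in>(UNIV::('n::finite + 'p::finite) set). f a) = (\<Sum>i\<in>UNIV. f (Inl i)) + (\<Sum>j\<in>UNIV. f (Inr j))"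
  using sum.Plus[of "UNIV::'n set" "UNIV::'p set" f] by (simp add: comp_def)

lemma delta_sum: "(\<Sum>j\<in>(UNIV::'n::finite set). (if i = j then 1 else 0) * (f j::real)) = f i"
  by (simp add: if_distrib[of "\<lambda>c. c * f _"] cong: if_cong)

definition Emat :: "real^('n::finite + 'p::finite)^('n + 'p)" where
  "Emat = (\<chi> a b. if a = b \<and> (\<exists>j. a = Inr j) then 1 else 0)"

definition Bm :: "('a \<Rightarrow> 'a \<Rightarrow> real) \<Rightarrow> ('p::finite \<Rightarrow> 'a \<Rightarrow> real) \<Rightarrow> ('n::finite \<Rightarrow> 'a) \<Rightarrow> real \<Rightarrow> real \<Rightarrow> real^('n + 'p)^('n + 'p)" where
  "Bm l v X \<sigma>2 \<epsilon> = block_mat (gram_mat l X) (design_mat v X) \<sigma>2 - \<epsilon> *\<^sub>R Emat"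

lemma Bm_Inl:
  "(Bm l v X \<sigma>2 \<epsilon> *v y) $ Inl i = (\<Sum>j\<in>UNIV. l (X i) (X j) * y $ Inl j) + \<sigma>2 * y $ Inl i + (\<Sum>k\<in>UNIV. v k (X i) * y $ Inr k)"
proof -
  have "(Bm l v X \<sigma>2 \<epsilon> *v y) $ Inl i = (\<Sum>j\<in>UNIV. (l (X i) (X j) + \<sigma>2 * (if i = j then 1 else 0)) * y $ Inl j) + (\<Sum>k\<in>UNIV. v k (X i) * y $ Inr k)"
    unfolding Bm_def matrix_vector_mult_def sum_plus_UNIV
    by (simp add: block_mat_def gram_mat_def design_mat_def Emat_def)
  also have "\<dots> = (\<Sum>j\<in>UNIV. l (X i) (X j) * y $ Inl j) + \<sigma>2 * y $ Inl i + (\<Sum>k\<in>UNIV. v k (X i) * y $ Inr k)"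
    by (simp add: distrib_right sum.distrib mult.assoc sum_distrib_left[symmetric] delta_sum)
  finally show ?thesis .
qed

lemma Bm_Inr:
  "(Bm l v X \<sigma>2 \<epsilon> *v y) $ Inr k = (\<Sum>j\<in>UNIV. v k (X j) * y $ Inl j) - \<epsilon> * y $ Inr k"
proof -
  have "(Bm l v X \<sigma>2 \<epsilon> *v y) $ Inr k = (\<Sum>j\<in>UNIV. v k (X j) * y $ Inl j) + (\<Sum>j\<in>UNIV. (- \<epsilon> * (if k = j then 1 else 0)) * y $ Inr j)"
    unfolding Bm_def matrix_vector_mult_def sum_plus_UNIV
    by (simp add: block_mat_def gram_mat_def design_mat_def Emat_def)
  also have "\<dots> = (\<Sum>j\<in>UNIV. v k (X j) * y $ Inl j) - \<epsilon> * y $ Inr k"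
    by (simp add: mult.assoc sum_distrib_left[symmetric] sum_negf delta_sum)
  finally show ?thesis .
qed

lemma B0_inv:
  fixes l :: "'a \<Rightarrow> 'a \<Rightarrow> real"
    and v :: "'p::finite \<Rightarrow> 'a \<Rightarrow> real"
    and X :: "'n::finite \<Rightarrow> 'a"
    and Q :: "real^'p^'n"
  assumes full_rank: "rank (design_mat v X) = CARD('p)"
    and Q_span: "span (columns Q) = span (columns (design_mat v X))"
    and psd: "psd_mat ((mat 1 - Q ** transpose Q) ** gram_mat l X ** (mat 1 - Q ** transpose Q))"
    and noise: "\<sigma>2 > 0"
  shows "invertible (Bm l v X \<sigma>2 0)"
proof (rule inv_from_ker)
  fix y assume y0: "Bm l v X \<sigma>2 0 *v y = 0"
  define u where "u = (\<chi> i. y $ Inl i)"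
  define w where "w = (\<chi> k. y $ Inr k)"
  have R1: "(\<Sum>j\<in>UNIV. l (X i) (X j) * u $ j) + \<sigma>2 * u $ i + (\<Sum>k\<in>UNIV. v k (X i) * w $ k) = 0" for i
    using arg_cong[OF y0, of "\<lambda>t. t $ Inl i"] by (simp add: Bm_Inl u_def w_def)
  have R2: "(\<Sum>j\<in>UNIV. v k (X j) * u $ j) = 0" for k
    using arg_cong[OF y0, of "\<lambda>t. t $ Inr k"] by (simp add: Bm_Inr u_def w_def)
  have orthV: "orthogonal u c" if cin: "c \<in> columns (design_mat v X)" for c
  proof -
    obtain k where c: "c = column k (design_mat v X)" using cin unfolding columns_def by blast
    have "u \<bullet> c = (\<Sum>j\<in>UNIV. v k (X j) * u $ j)"
      by (simp add: c inner_vec_def column_def design_mat_def mult.commute)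
    then show ?thesis using R2 by (simp add: orthogonal_def)
  qed
  have orthQ: "u \<bullet> column k Q = 0" for k
  proof -
    have "column k Q \<in> span (columns (design_mat v X))"
      using Q_span span_base[of "column k Q" "columns Q"] by (auto simp: columns_def)
    then show ?thesis using orthogonal_to_span[OF _ orthV] by (simp add: orthogonal_def)
  qed
  have QtU: "transpose Q *v u = 0"
  proof -
    have "(transpose Q *v u) $ k = u \<bullet> column k Q" for k
      by (simp add: matrix_vector_mult_def transpose_def column_def inner_vec_def mult.commute)
    then show ?thesis using orthQ by (simp add: vec_eq_iff)
  qed
  have QtU': "u v* Q = 0" using QtU by simp
  have uQ: "u \<bullet> (Q *v s) = 0" for s
    by (metis dot_lmul_matrix QtU transpose_matrix_vector inner_zero_left)
  have Pu: "(mat 1 - Q ** transpose Q) *v u = u"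
    by (simp add: matrix_vector_mult_diff_rdistrib matrix_vector_mul_assoc[symmetric] QtU')
  have uP: "u \<bullet> ((mat 1 - Q ** transpose Q) *v t) = u \<bullet> t" for t
    by (simp add: matrix_vector_mult_diff_rdistrib matrix_vector_mul_assoc[symmetric] inner_diff_right uQ)
  have Lpos: "0 \<le> u \<bullet> (gram_mat l X *v u)"
    using psd[unfolded psd_mat_def, rule_format, of u]
    by (simp add: matrix_vector_mul_assoc[symmetric] Pu uP)
  have Lu: "u \<bullet> (gram_mat l X *v u) = (\<Sum>i\<in>UNIV. u $ i * (\<Sum>j\<in>UNIV. l (X i) (X j) * u $ j))"
    by (simp add: inner_vec_def matrix_vector_mult_def gram_mat_def)
  have cross: "(\<Sum>i\<in>UNIV. u $ i * (\<Sum>k\<in>UNIV. v k (X i) * w $ k)) = 0"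
  proof -
    have "(\<Sum>i\<in>UNIV. u $ i * (\<Sum>k\<in>UNIV. v k (X i) * w $ k))
        = (\<Sum>k\<in>UNIV. w $ k * (\<Sum>i\<in>UNIV. v k (X i) * u $ i))"
      by (simp add: sum_distrib_left sum.swap[of _ "UNIV::'n set"] mult_ac)
    then show ?thesis using R2 by simp
  qed
  have "0 = (\<Sum>i\<in>UNIV. u $ i * ((\<Sum>j\<in>UNIV. l (X i) (X j) * u $ j) + \<sigma>2 * u $ i + (\<Sum>k\<in>UNIV. v k (X i) * w $ k)))"
    using R1 by simp
  also have "\<dots> = u \<bullet> (gram_mat l X *v u) + \<sigma>2 * (u \<bullet> u)"
    using cross by (simp add: matrix_vector_mult_def gram_mat_def distrib_left sum.distrib inner_vec_def sum_distrib_left mult_ac)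
  finally have "\<sigma>2 * (u \<bullet> u) \<le> 0" using Lpos by linarith
  then have "u \<bullet> u \<le> 0" using noise by (simp add: mult_le_0_iff)
  then have u0: "u = 0" using inner_ge_zero[of u] inner_eq_zero_iff[of u] by linarith
  have "design_mat v X *v w = 0"
  proof -
    have "(design_mat v X *v w) $ i = 0" for i
      using R1[of i] by (simp add: u0 matrix_vector_mult_def design_mat_def)
    then show ?thesis by (simp add: vec_eq_iff)
  qed
  then have w0: "w = 0"
    using full_rank[unfolded full_rank_injective] by (metis injD matrix_vector_mult_0_right)
  show "y = 0"
  proof (subst vec_eq_iff, rule allI)
    fix a show "y $ a = 0 $ a"
    proof (cases a)
      case (Inl i) then show ?thesis using u0 by (simp add: u_def vec_eq_iff)
    next
      case (Inr k) then show ?thesis using w0 by (simp add: w_def vec_eq_iff)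
    qed
  qed
qed


lemma gp_identity:
  fixes l :: "'a \<Rightarrow> 'a \<Rightarrow> real"
    and v :: "'p::finite \<Rightarrow> 'a \<Rightarrow> real"
    and X :: "'n::finite \<Rightarrow> 'a"
  assumes eps: "\<epsilon> > 0" and inv: "invertible (Bm l v X \<sigma>2 \<epsilon>)"
    and sol: "Bm l v X \<sigma>2 \<epsilon> *v y = z"
    and zdef: "z = (\<chi> a. case a of Inl i \<Rightarrow> l x (X i) | Inr j \<Rightarrow> v j x)"
  shows "gp_pred_var (k_eps l v \<epsilon>) X \<sigma>2 x = l x x - z \<bullet> y"
proof -
  define K where "K = (\<chi> i j. k_eps l v \<epsilon> (X i) (X j)) + \<sigma>2 *\<^sub>R (mat 1 :: real^'n^'n)"
  define kx where "kx = ((\<chi> i. k_eps l v \<epsilon> x (X i)) :: real^'n)"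
  have gp: "gp_pred_var (k_eps l v \<epsilon>) X \<sigma>2 x = k_eps l v \<epsilon> x x - kx \<bullet> (matrix_inv K *v kx)"
    by (simp add: gp_pred_var_def Let_def K_def kx_def)
  have Kc: "(K *v t) $ i = (\<Sum>j\<in>UNIV. l (X i) (X j) * t $ j) + \<sigma>2 * t $ i
      + inverse \<epsilon> * (\<Sum>k\<in>UNIV. v k (X i) * (\<Sum>j\<in>UNIV. v k (X j) * t $ j))" for t i
  proof -
    have "(K *v t) $ i = (\<Sum>j\<in>UNIV. (l (X i) (X j) + inverse \<epsilon> * (\<Sum>k\<in>UNIV. v k (X i) * v k (X j))
        + \<sigma>2 * (if i = j then 1 else 0)) * t $ j)"
      by (simp add: K_def matrix_vector_mult_def k_eps_def mat_def)
    also have "\<dots> = (\<Sum>j\<in>UNIV. l (X i) (X j) * t $ j) + inverse \<epsilon> * (\<Sum>j\<in>UNIV. (\<Sum>k\<in>UNIV. v k (X i) * v k (X j)) * t $ j)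
        + \<sigma>2 * t $ i"
      by (simp add: distrib_right sum.distrib mult.assoc sum_distrib_left[symmetric] delta_sum)
    also have "(\<Sum>j\<in>UNIV. (\<Sum>k\<in>UNIV. v k (X i) * v k (X j)) * t $ j)
        = (\<Sum>k\<in>UNIV. v k (X i) * (\<Sum>j\<in>UNIV. v k (X j) * t $ j))"
      by (simp add: sum_distrib_left sum_distrib_right sum.swap[of _ "UNIV::'n set"] mult_ac)
    finally show ?thesis by simp
  qed
  define u where "u = (\<chi> i. y $ Inl i)"
  define w where "w = (\<chi> k. y $ Inr k)"
  have E1: "(\<Sum>j\<in>UNIV. l (X i) (X j) * u $ j) + \<sigma>2 * u $ i + (\<Sum>k\<in>UNIV. v k (X i) * w $ k) = l x (X i)" for i
    using arg_cong[OF sol, of "\<lambda>t. t $ Inl i"] by (simp add: Bm_Inl u_def w_def zdef)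
  have E2: "(\<Sum>j\<in>UNIV. v k (X j) * u $ j) = v k x + \<epsilon> * w $ k" for k
    using arg_cong[OF sol, of "\<lambda>t. t $ Inr k"] by (simp add: Bm_Inr u_def w_def zdef algebra_simps)
  have Kinv: "invertible K"
  proof (rule inv_from_ker)
    fix t assume t0: "K *v t = 0"
    define y' where "y' = (\<chi> a. case a of Inl i \<Rightarrow> t $ i | Inr k \<Rightarrow> inverse \<epsilon> * (\<Sum>j\<in>UNIV. v k (X j) * t $ j))"
    have "Bm l v X \<sigma>2 \<epsilon> *v y' = 0"
    proof (subst vec_eq_iff, rule allI)
      fix a show "(Bm l v X \<sigma>2 \<epsilon> *v y') $ a = 0 $ a"
      proof (cases a)
        case (Inl i)
        have "(Bm l v X \<sigma>2 \<epsilon> *v y') $ a = (K *v t) $ i"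
          by (simp add: Inl Bm_Inl Kc y'_def sum_distrib_left mult_ac)
        then show ?thesis using t0 by simp
      next
        case (Inr k)
        show ?thesis using eps by (simp add: Inr Bm_Inr y'_def)
      qed
    qed
    then have "y' = 0" using inv inv_ker by blast
    then have "\<And>i. y' $ Inl i = 0" by simp
    then show "t = 0" by (simp add: vec_eq_iff y'_def)
  qed
  have ei: "\<epsilon> * (inverse \<epsilon> * a) = a" "inverse \<epsilon> * (\<epsilon> * a) = a" for a using eps by simp_all
  have Ku: "K *v u = kx"
  proof (subst vec_eq_iff, rule allI)
    fix i
    have "(K *v u) $ i = (\<Sum>j\<in>UNIV. l (X i) (X j) * u $ j) + \<sigma>2 * u $ i
      + inverse \<epsilon> * (\<Sum>k\<in>UNIV. v k (X i) * (v k x + \<epsilon> * w $ k))" by (simp add: Kc E2)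
    also have "\<dots> = (\<Sum>j\<in>UNIV. l (X i) (X j) * u $ j) + \<sigma>2 * u $ i
      + inverse \<epsilon> * (\<Sum>k\<in>UNIV. v k (X i) * v k x) + (\<Sum>k\<in>UNIV. v k (X i) * w $ k)"
      using eps by (simp add: distrib_left sum.distrib sum_distrib_left mult_ac ei)
    also have "\<dots> = kx $ i" using E1[of i] by (simp add: kx_def k_eps_def mult_ac)
    finally show "(K *v u) $ i = kx $ i" .
  qed
  have Ku': "matrix_inv K *v kx = u" using minv_solve[OF Kinv Ku] .
  have kxu: "kx \<bullet> u = (\<Sum>i\<in>UNIV. l x (X i) * u $ i) + inverse \<epsilon> * (\<Sum>k\<in>UNIV. v k x * v k x) + (\<Sum>k\<in>UNIV. v k x * w $ k)"
  proof -
    have "kx \<bullet> u = (\<Sum>i\<in>UNIV. l x (X i) * u $ i) + inverse \<epsilon> * (\<Sum>k\<in>UNIV. v k x * (\<Sum>i\<in>UNIV. v k (X i) * u $ i))"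
      by (simp add: inner_vec_def kx_def k_eps_def distrib_left distrib_right sum.distrib sum_distrib_left sum_distrib_right
          sum.swap[of _ "UNIV::'n set"] mult_ac)
    also have "\<dots> = (\<Sum>i\<in>UNIV. l x (X i) * u $ i) + inverse \<epsilon> * (\<Sum>k\<in>UNIV. v k x * v k x) + (\<Sum>k\<in>UNIV. v k x * w $ k)"
      using eps unfolding E2 by (simp add: distrib_left sum.distrib sum_distrib_left mult_ac ei)
    finally show ?thesis .
  qed
  have zy: "z \<bullet> y = (\<Sum>i\<in>UNIV. l x (X i) * u $ i) + (\<Sum>k\<in>UNIV. v k x * w $ k)"
    by (simp add: inner_vec_def sum_plus_UNIV zdef u_def w_def)
  show ?thesis unfolding gp Ku' kxu zy by (simp add: k_eps_def)
qed


lemma perturb_bound: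
  fixes B0 M E :: "real^'m::finite^'m"
  assumes inv: "invertible B0" and M: "M = matrix_inv B0 ** E"
    and C: "\<And>t. norm (M *v t) \<le> C * norm t" and Cpos: "C > 0"
    and eps: "0 < \<epsilon>" "\<epsilon> * C \<le> 1/2"
    and eq: "(B0 - \<epsilon> *\<^sub>R E) *v y = B0 *v y0"
  shows "norm (y - y0) \<le> 2 * C * \<epsilon> * norm y0"
proof -
  have "B0 *v (y - y0) = \<epsilon> *\<^sub>R (E *v y)"
    using eq by (simp add: algebra_simps scaleR_matrix_vector_assoc)
  then have "matrix_inv B0 *v (\<epsilon> *\<^sub>R (E *v y)) = y - y0" using minv_solve[OF inv] by blast
  then have d: "y - y0 = \<epsilon> *\<^sub>R (M *v y)"
    by (simp add: M matrix_vector_mult_scaleR matrix_vector_mul_assoc[symmetric])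
  then have n1: "norm (y - y0) \<le> \<epsilon> * C * norm y"
    using C[of y] eps by (simp add: mult.assoc mult_left_mono)
  have "norm y \<le> norm y0 + norm (y - y0)" by (metis norm_triangle_sub)
  also have "\<dots> \<le> norm y0 + 1/2 * norm y"
    using n1 mult_right_mono[OF eps(2) norm_ge_zero[of y]] by linarith
  finally have "norm y \<le> 2 * norm y0" by linarith
  then have "\<epsilon> * C * norm y \<le> \<epsilon> * C * (2 * norm y0)"
    using eps Cpos by (intro mult_left_mono) auto
  then show ?thesis using n1 by (simp add: mult_ac)
qed

theorem mainTheorem8:
  fixes l :: "'a \<Rightarrow> 'a \<Rightarrow> real"
    and v :: "'p::finite \<Rightarrow> 'a \<Rightarrow> real"
    and X :: "'n::finite \<Rightarrow> 'a"
    and Q :: "real^'p^'n"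
    and \<sigma>2 :: real
    and x :: 'a
  assumes sym: "\<And>y z. l y z = l z y"
    and full_rank: "rank (design_mat v X) = CARD('p)"
    and Q_orth: "transpose Q ** Q = mat 1"
    and Q_span: "span (columns Q) = span (columns (design_mat v X))"
    and psd: "psd_mat ((mat 1 - Q ** transpose Q) ** gram_mat l X ** (mat 1 - Q ** transpose Q))"
    and noise: "\<sigma>2 > 0"
  shows "(\<lambda>\<epsilon>. gp_pred_var (k_eps l v \<epsilon>) X \<sigma>2 x - limit_var l v X \<sigma>2 x)
           \<in> O[at_right 0](\<lambda>\<epsilon>. \<epsilon>)"
proof -
  define z where "z = ((\<chi> a. case a of Inl i \<Rightarrow> l x (X i) | Inr j \<Rightarrow> v j x) :: real^('n + 'p))"
  define B0 where "B0 = Bm l v X \<sigma>2 0"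
  have B0inv: "invertible B0" unfolding B0_def by (rule B0_inv[OF full_rank Q_span psd noise])
  have B0eq: "block_mat (gram_mat l X) (design_mat v X) \<sigma>2 = B0" by (simp add: B0_def Bm_def)
  define y0 where "y0 = matrix_inv B0 *v z"
  have lim: "limit_var l v X \<sigma>2 x = l x x - z \<bullet> y0"
    by (simp add: limit_var_def Let_def z_def y0_def B0eq)
  have By0: "B0 *v y0 = z"
    by (simp add: y0_def matrix_vector_mul_assoc minv_props(2)[OF B0inv])
  define M where "M = matrix_inv B0 ** Emat"
  obtain C where Cpos: "C > 0" and C: "\<And>t. norm (M *v t) \<le> C * norm t"
    using linear_bounded_pos[OF matrix_vector_mul_linear[of M]] by blast
  have Bm_eq: "Bm l v X \<sigma>2 \<epsilon> = B0 - \<epsilon> *\<^sub>R Emat" for \<epsilon>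
    by (simp add: Bm_def B0_def)
  have ev: "\<forall>\<^sub>F \<epsilon> in at_right 0. norm (gp_pred_var (k_eps l v \<epsilon>) X \<sigma>2 x - limit_var l v X \<sigma>2 x)
      \<le> (norm z * (2 * C) * norm y0) * norm \<epsilon>"
    unfolding eventually_at_right_field
  proof (intro exI conjI allI impI)
    show "(0::real) < 1 / (2 * C)" using Cpos by simp
    fix \<epsilon> :: real assume e0: "0 < \<epsilon>" and e1: "\<epsilon> < 1 / (2 * C)"
    have eC: "\<epsilon> * C \<le> 1/2" using e1 Cpos by (simp add: field_simps)
    have Binv: "invertible (Bm l v X \<sigma>2 \<epsilon>)"
    proof (rule inv_from_ker)
      fix t assume "Bm l v X \<sigma>2 \<epsilon> *v t = 0"
      then have "(B0 - \<epsilon> *\<^sub>R Emat) *v t = B0 *v 0" by (simp add: Bm_eq)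
      from perturb_bound[OF B0inv M_def C Cpos e0 eC this] show "t = 0" by simp
    qed
    define y where "y = matrix_inv (Bm l v X \<sigma>2 \<epsilon>) *v z"
    have By: "Bm l v X \<sigma>2 \<epsilon> *v y = z"
      by (simp add: y_def matrix_vector_mul_assoc minv_props(2)[OF Binv])
    have gp: "gp_pred_var (k_eps l v \<epsilon>) X \<sigma>2 x = l x x - z \<bullet> y"
      by (rule gp_identity[OF e0 Binv By z_def])
    have nb: "norm (y - y0) \<le> 2 * C * \<epsilon> * norm y0"
      using perturb_bound[OF B0inv M_def C Cpos e0 eC] By By0 Bm_eq by simp
    have "norm (gp_pred_var (k_eps l v \<epsilon>) X \<sigma>2 x - limit_var l v X \<sigma>2 x) = \<bar>z \<bullet> (y - y0)\<bar>"
      by (simp add: gp lim inner_diff_right)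
    also have "\<dots> \<le> norm z * norm (y - y0)" by (rule Cauchy_Schwarz_ineq2)
    also have "\<dots> \<le> norm z * (2 * C * \<epsilon> * norm y0)" by (intro mult_left_mono nb) simp
    finally show "norm (gp_pred_var (k_eps l v \<epsilon>) X \<sigma>2 x - limit_var l v X \<sigma>2 x)
      \<le> (norm z * (2 * C) * norm y0) * norm \<epsilon>" using e0 by (simp add: mult_ac)
  qed
  show ?thesis by (rule bigoI[OF ev])
qed

end
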